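(* Let $n$ be even and $1\le k\le n/2$, and define $$\mathcal C_4(n,k)=\{0^k1\vec c1:\ \vec c\in\{0,1\}^{n-k-2},\ w_H(\vec c)=\tfrac n2-2,\ \vec c\text{ has no run of }k\text{ consecutive zeros}\}.$$ Then $\mathcal C_4(n,k)$ is a balanced MU code. Moreover, for a fixed integer $a\ge1$, as $n\to\infty$ over powers of $2$, $$\liminf_{n\to\infty}\ \frac{|\mathcal C_4(n,\log_2 n+a)|}{\frac{2^n}{n\sqrt n}}\ \ge\ \frac{2^a-1}{2^{2a+1}\sqrt{2\pi}}.$$
   Context: Binary alphabet; $w_H$ is Hamming weight. A binary word of even length $n$ is balanced if its Hamming weight is $n/2$. A code $\mathcal C\subseteq\{0,1\}^n$ is mutually uncorrelated (MU) if for any two not necessarily distinct codewords $\vec a,\vec b$, no proper nonempty prefix of $\vec a$ equals a suffix of $\vec b$ of the same length; a balanced MU code is an MU code whose codewords are all balanced. *)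

theory Defs
  imports "HOL-Library.Extended_Real" Complex_Main
begin

text \<open>Binary words are bool lists: False = 0, True = 1.\<close>

definition hw :: "bool list \<Rightarrow> nat" where
  "hw w = length (filter id w)"

definition balanced :: "bool list \<Rightarrow> bool" where
  "balanced w \<longleftrightarrow> even (length w) \<and> 2 * hw w = length w"

definition MU :: "nat \<Rightarrow> bool list set \<Rightarrow> bool" where
  "MU n C \<longleftrightarrow> (\<forall>w\<in>C. length w = n) \<and>
     (\<forall>a\<in>C. \<forall>b\<in>C. \<forall>i. 0 < i \<and> i < n \<longrightarrow> take i a \<noteq> drop (n - i) b)"

definition balanced_MU :: "nat \<Rightarrow> bool list set \<Rightarrow> bool" where
  "balanced_MU n C \<longleftrightarrow> MU n C \<and> (\<forall>w\<in>C. balanced w)"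

definition no_zero_run :: "nat \<Rightarrow> bool list \<Rightarrow> bool" where
  "no_zero_run k c \<longleftrightarrow> \<not> (\<exists>u v. c = u @ replicate k False @ v)"

definition C4 :: "nat \<Rightarrow> nat \<Rightarrow> bool list set" where
  "C4 n k = {replicate k False @ [True] @ c @ [True] | c.
       k + length c + 2 = n \<and> hw c + 2 = n div 2 \<and> no_zero_run k c}"

end

theory Submission
  imports Defs "HOL-Analysis.Analysis" "HOL-Real_Asymp.Real_Asymp"
begin


lemma hw_append[simp]: "hw (u @ v) = hw u + hw v" by (simp add: hw_def)
lemma hw_Cons[simp]: "hw (x # v) = (if x then 1 else 0) + hw v" by (simp add: hw_def)
lemma hw_Nil[simp]: "hw [] = 0" by (simp add: hw_def)
lemma hw_rep[simp]: "hw (replicate k False) = 0" by (simp add: hw_def)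

lemma hw_card: "hw c = card {i. i < length c \<and> c ! i}"
  by (simp add: hw_def length_filter_conv_card)

lemma card_words: "card {c::bool list. length c = L \<and> hw c = w} = L choose w"
proof -
  define f where "f = (\<lambda>c::bool list. {i. i < length c \<and> c ! i})"
  have "bij_betw f {c::bool list. length c = L \<and> hw c = w} {B. B \<subseteq> {0..<L} \<and> card B = w}"
  proof (rule bij_betw_imageI)
    show "inj_on f {c::bool list. length c = L \<and> hw c = w}"
    proof (rule inj_onI)
      fix x y assume x: "x \<in> {c::bool list. length c = L \<and> hw c = w}"
        and y: "y \<in> {c::bool list. length c = L \<and> hw c = w}" and e: "f x = f y"
      show "x = y"
      proof (rule nth_equalityI)
        show "length x = length y" using x y by simp
        fix i assume "i < length x"
        then show "x ! i = y ! i" using e x y unfolding f_def by (simp add: set_eq_iff) metis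
      qed
    qed
    show "f ` {c::bool list. length c = L \<and> hw c = w} = {B. B \<subseteq> {0..<L} \<and> card B = w}"
    proof (intro set_eqI iffI)
      fix B assume "B \<in> f ` {c::bool list. length c = L \<and> hw c = w}"
      then obtain c where "length c = L" "hw c = w" "B = f c" by auto
      then show "B \<in> {B. B \<subseteq> {0..<L} \<and> card B = w}" by (auto simp: f_def hw_card)
    next
      fix B assume B: "B \<in> {B. B \<subseteq> {0..<L} \<and> card B = w}"
      define c where "c = map (\<lambda>i. i \<in> B) [0..<L]"
      have fc: "f c = B" using B by (auto simp: f_def c_def)
      have "length c = L" by (simp add: c_def)
      moreover have "hw c = card (f c)" by (simp add: hw_card f_def)
      hence "hw c = w" using fc B by simp
      ultimately show "B \<in> f ` {c::bool list. length c = L \<and> hw c = w}" using fc by blast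
    qed
  qed
  then have "card {c::bool list. length c = L \<and> hw c = w} = card {B. B \<subseteq> {0..<L} \<and> card B = w}"
    by (rule bij_betw_same_card)
  also have "\<dots> = L choose w" by (subst n_subsets) auto
  finally show ?thesis .
qed

lemma finite_words: "finite {c::bool list. length c = L \<and> P c}"
proof -
  have "{c::bool list. length c = L \<and> P c} \<subseteq> {c. set c \<subseteq> UNIV \<and> length c = L}" by auto
  moreover have "finite {c::bool list. set c \<subseteq> UNIV \<and> length c = L}"
    by (rule finite_lists_length_eq) simp
  ultimately show ?thesis by (rule finite_subset)
qed

lemma card_Bj:
  assumes "j + k \<le> L"
  shows "card {c::bool list. length c = L \<and> hw c = w \<and> take k (drop j c) = replicate k False}
         \<le> (L - k) choose w"
proof -
  let ?B = "{c::bool list. length c = L \<and> hw c = w \<and> take k (drop j c) = replicate k False}"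
  define g where "g = (\<lambda>c::bool list. take j c @ drop (j + k) c)"
  have inj: "inj_on g ?B"
  proof (rule inj_onI)
    fix x y assume x: "x \<in> ?B" and y: "y \<in> ?B" and e: "g x = g y"
    have lx: "length (take j x) = j" "length (take j y) = j" using x y assms by auto
    have 1: "take j x = take j y" "drop (j+k) x = drop (j+k) y"
      using e lx unfolding g_def by (metis append_eq_append_conv)+
    have "x = take j x @ take k (drop j x) @ drop k (drop j x)" by (metis append_take_drop_id)
    also have "\<dots> = take j y @ take k (drop j y) @ drop k (drop j y)"
      using 1 x y by (simp add: add.commute)
    also have "\<dots> = y" by (metis append_take_drop_id)
    finally show "x = y" .
  qed
  have sub: "g ` ?B \<subseteq> {c::bool list. length c = L - k \<and> hw c = w}"
  proof
    fix d assume "d \<in> g ` ?B"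
    then obtain c where c: "c \<in> ?B" "d = g c" by auto
    have t: "take k (drop j c) = replicate k False" using c(1) by simp
    have "hw c = hw (take j c @ take k (drop j c) @ drop k (drop j c))" by (simp only: append_take_drop_id)
    also have "\<dots> = hw (take j c) + hw (drop (j+k) c)" by (simp only: t hw_append hw_rep drop_drop add.commute add_0)
    finally have "hw c = hw (take j c) + hw (drop (j+k) c)" .
    then show "d \<in> {c::bool list. length c = L - k \<and> hw c = w}"
      using c assms by (auto simp: g_def)
  qed
  have "card ?B = card (g ` ?B)" using inj by (simp add: card_image)
  also have "\<dots> \<le> card {c::bool list. length c = L - k \<and> hw c = w}"
    by (rule card_mono[OF finite_words sub])
  also have "\<dots> = (L - k) choose w" by (rule card_words)
  finally show ?thesis .
qed

lemma card_S:
  assumes "k \<le> L"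
  shows "card {c::bool list. length c = L \<and> hw c = w \<and> no_zero_run k c}
         \<ge> (L choose w) - (L - k + 1) * ((L - k) choose w)"
proof -
  let ?A = "{c::bool list. length c = L \<and> hw c = w}"
  let ?B = "\<lambda>j. {c::bool list. length c = L \<and> hw c = w \<and> take k (drop j c) = replicate k False}"
  let ?U = "\<Union>j\<in>{0..L-k}. ?B j"
  have sub: "?A - ?U \<subseteq> {c::bool list. length c = L \<and> hw c = w \<and> no_zero_run k c}"
  proof
    fix c assume c: "c \<in> ?A - ?U"
    have "no_zero_run k c"
      unfolding no_zero_run_def
    proof
      assume "\<exists>u v. c = u @ replicate k False @ v"
      then obtain u v where uv: "c = u @ replicate k False @ v" by blast
      have "take k (drop (length u) c) = replicate k False" using uv by simp
      moreover have "length u \<le> L - k" using uv c by auto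
      ultimately have "c \<in> ?U" using c by auto
      thus False using c by blast
    qed
    thus "c \<in> {c::bool list. length c = L \<and> hw c = w \<and> no_zero_run k c}" using c by auto
  qed
  have fU: "finite ?U" by (intro finite_UN_I finite_atLeastAtMost finite_words)
  have "card ?U \<le> (\<Sum>j\<in>{0..L-k}. card (?B j))" by (rule card_UN_le) simp
  also have "\<dots> \<le> (\<Sum>j\<in>{0..L-k}. (L - k) choose w)"
    by (rule sum_mono) (rule card_Bj, use assms in auto)
  also have "\<dots> = (L - k + 1) * ((L - k) choose w)" by simp
  finally have cU: "card ?U \<le> (L - k + 1) * ((L - k) choose w)" .
  have "(L choose w) - (L - k + 1) * ((L - k) choose w) \<le> card ?A - card ?U"
    using cU card_words[of L w] by linarith
  also have "\<dots> \<le> card (?A - ?U)" by (rule diff_card_le_card_Diff[OF fU])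
  also have "\<dots> \<le> card {c::bool list. length c = L \<and> hw c = w \<and> no_zero_run k c}"
    by (rule card_mono[OF finite_words sub])
  finally show ?thesis .
qed

lemma card_C4:
  assumes "k + 2 \<le> n" "2 \<le> n div 2"
  shows "card (C4 n k) = card {c::bool list. length c = n - k - 2 \<and> hw c = n div 2 - 2 \<and> no_zero_run k c}"
proof -
  let ?S = "{c::bool list. length c = n - k - 2 \<and> hw c = n div 2 - 2 \<and> no_zero_run k c}"
  let ?h = "\<lambda>c. replicate k False @ [True] @ c @ [True]"
  have "C4 n k = ?h ` ?S"
  proof (intro set_eqI iffI)
    fix x assume "x \<in> C4 n k"
    then obtain c where "x = ?h c" "k + length c + 2 = n" "hw c + 2 = n div 2" "no_zero_run k c"
      unfolding C4_def by blast
    then show "x \<in> ?h ` ?S" by force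
  next
    fix x assume "x \<in> ?h ` ?S"
    then obtain c where c: "x = ?h c" "c \<in> ?S" by blast
    then show "x \<in> C4 n k" using assms unfolding C4_def by force
  qed
  moreover have "inj_on ?h ?S" by (rule inj_onI) simp
  ultimately show ?thesis by (simp add: card_image)
qed



lemma run_not_nzr:
  assumes "take k (drop j c) = replicate k False"
  shows "\<not> no_zero_run k c"
proof -
  have "c = take j c @ take k (drop j c) @ drop k (drop j c)"
    by (metis append_take_drop_id)
  then show ?thesis using assms unfolding no_zero_run_def by metis
qed


lemma part1:
  assumes "even n" and "1 \<le> k"
  shows "balanced_MU n (C4 n k)"
  unfolding balanced_MU_def MU_def
proof (intro conjI ballI allI impI)
  fix w assume "w \<in> C4 n k" then show "length w = n" by (auto simp: C4_def)
next
  fix w assume "w \<in> C4 n k" then show "balanced w" using assms(1)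
    by (auto simp: C4_def balanced_def)
next
  fix a b i assume a: "a \<in> C4 n k" and b: "b \<in> C4 n k" and i: "0 < i \<and> i < n"
  obtain c where ca: "a = replicate k False @ [True] @ c @ [True]" using a by (auto simp: C4_def)
  obtain c' where cb: "b = replicate k False @ [True] @ c' @ [True]" "k + length c' + 2 = n"
     "no_zero_run k c'" using b by (auto simp: C4_def)
  show "take i a \<noteq> drop (n - i) b"
  proof
    assume eq: "take i a = drop (n - i) b"
    define p where "p = n - i"
    have lb: "length b = n" using cb by simp
    show False
    proof (cases "i \<le> k")
      case True
      have "take i a ! (i-1) = a ! (i-1)" using i by simp
      also have "\<dots> = False"
      proof -
        have "i - 1 < k" using True i by linarith
        thus ?thesis using ca by (simp add: nth_append)
      qed
      finally have 1: "take i a ! (i-1) = False" .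
      have "drop (n-i) b ! (i-1) = b ! (n - i + (i-1))" using i lb by (simp add: nth_drop)
      also have "n - i + (i-1) = n - 1" using i by simp
      also have "b ! (n-1) = last b" using lb i by (metis last_conv_nth list.size(3) not_less0)
      also have "last b = True" using cb by simp
      finally show False using 1 eq by simp
    next
      case False
      have tk: "take k (take i a) = replicate k False" using False ca by (simp add: take_append min_def)
      hence tk2: "take k (drop p b) = replicate k False" using eq p_def by simp
      show False
      proof (cases "p \<le> k")
        case True
        have "p > 0" using i p_def by simp
        have kp: "k - p < k" using True \<open>p>0\<close> \<open>\<not> i \<le> k\<close> by linarith
        have kn: "p + (k - p) < length b" using True lb \<open>\<not> i \<le> k\<close> i by linarith
        have "take k (drop p b) ! (k - p) = b ! (p + (k-p))"
        proof -
          have "p \<le> length b" using kn by linarith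
          thus ?thesis by (simp only: nth_take[OF kp] nth_drop)
        qed
        also have "p + (k-p) = k" using True by simp
        also have "b ! k = True" using cb by (simp add: nth_append)
        finally have "take k (drop p b) ! (k - p) = True" .
        thus False using tk2 \<open>p>0\<close> True by simp
      next
        case False
        have e1: "p - k = Suc (p - Suc k)" using False by simp
        have e2: "p - Suc k \<le> length c'" using cb p_def i by linarith
        have "drop p b = drop (p-k-1) c' @ [True]" using False cb e2
          by (simp add: drop_append e1)
        moreover have "length (drop (p-k-1) c') \<ge> k" using cb False p_def i \<open>\<not> i \<le> k\<close> by simp
        ultimately have "take k (drop (p-k-1) c') = replicate k False" using tk2 by simp
        thus False using run_not_nzr cb(3) by blast
      qed
    qed
  qed
qed


lemma poch_alg:
  fixes A B F t :: real
  assumes "B > 0" "F > 0" "t \<ge> 0"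
  shows "A / (B * F) * (1/2 + t) = (2*(t+1))*((2*t+1)*A) / ((4 * B) * ((t+1) * F))"
proof -
  obtain y where y: "y = t + 1" by simp
  have "y > 0" using y assms by simp
  then show ?thesis unfolding y[symmetric] using assms by (simp add: field_simps)
qed

lemma poch_half: "pochhammer (1/2::real) n = fact (2*n) / (4^n * fact n)"
proof (induction n)
  case 0 then show ?case by simp
next
  case (Suc n)
  have "pochhammer (1/2::real) (Suc n) = pochhammer (1/2) n * (1/2 + real n)"
    by (simp add: pochhammer_Suc)
  also have "\<dots> = fact (2*n) / (4^n * fact n) * (1/2 + real n)" using Suc by simp
  also have "\<dots> = fact (2*Suc n) / (4^Suc n * fact (Suc n))"
  proof -
    have e: "2 * Suc n = Suc (Suc (2*n))" by simp
    have f2: "(fact (2*Suc n)::real) = (2*(real n+1))*((2*real n+1)*fact(2*n))"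
      unfolding e fact_Suc by (simp add: algebra_simps)
    have f1: "(fact (Suc n)::real) = (real n + 1) * fact n" by (simp add: fact_Suc algebra_simps)
    have p1: "(fact n::real) > 0" "(4::real)^n > 0" by simp_all
    show ?thesis unfolding f2 f1 power_Suc by (rule poch_alg) (use p1 in auto)
  qed
  finally show ?case .
qed

lemma alg:
  fixes F C s x G q :: real
  assumes "F > 0" "C > 0" "s > 0" "x = s * s" "q > 0" "G = F * s / ((C * F / q) * (1/2 + x))" 
  shows "(x / (x + 1/2)) / G = C * s / q"
proof -
  have "x \<ge> 0" using assms(4) by simp
  obtain y where y: "y = 1/2 + x" by simp
  have "y > 0" using y \<open>x \<ge> 0\<close> by simp
  have "x + 1/2 = y" using y by simp
  have Gy: "G = F * s / ((C * F / q) * y)" using assms(6) y by simp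
  show ?thesis unfolding Gy \<open>x + 1/2 = y\<close> unfolding assms(4) using assms(1,2,3,5) \<open>y>0\<close>
    by (simp add: field_simps)
qed

lemma central_binom_lim:
  "(\<lambda>n. real ((2*n) choose n) * sqrt (real n) / 4^n) \<longlonglongrightarrow> 1 / sqrt pi"
proof -
  let ?G = "Gamma_series (1/2::real)"
  have G: "?G \<longlonglongrightarrow> sqrt pi" using Gamma_series_LIMSEQ[of "1/2::real"]
    by (simp add: Gamma_one_half_real)
  have q: "(\<lambda>n. real n / (real n + 1/2)) \<longlonglongrightarrow> 1" by real_asymp
  have lim: "(\<lambda>n. (real n / (real n + 1/2)) / ?G n) \<longlonglongrightarrow> 1 / sqrt pi"
    by (intro tendsto_divide q G) simp
  have ev: "eventually (\<lambda>n. (real n / (real n + 1/2)) / ?G n =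
           real ((2*n) choose n) * sqrt (real n) / 4^n) sequentially"
    using eventually_gt_at_top[of 0]
  proof eventually_elim
    case (elim n)
    have fe0: "fact n * fact n * ((2*n) choose n) = (fact (2*n) :: nat)"
      using binomial_fact_lemma[of n "2*n"] by simp
    have fe: "(fact (2*n)::real) = real ((2*n) choose n) * fact n * fact n"
      using arg_cong[OF fe0, of real] by (simp add: ac_simps)
    have ex: "exp (1/2 * ln (real n)) = sqrt (real n)"
    proof -
      have p: "real n > 0" using elim by simp
      have "exp (1/2 * ln (real n)) = exp (ln (sqrt (real n)))" using ln_sqrt[of "real n"] by simp
      also have "\<dots> = sqrt (real n)" using p by simp
      finally show ?thesis .
    qed
    have G1: "?G n = fact n * sqrt (real n) / (pochhammer (1/2) n * (1/2 + real n))"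
      unfolding Gamma_series_def using ex by (simp add: pochhammer_Suc)
    have P: "pochhammer (1/2::real) n = real ((2*n) choose n) * fact n / 4^n"
      by (simp only: poch_half fe) (simp add: field_simps)
    show ?case
      by (rule alg[OF _ _ _ _ _ G1[unfolded P]]) (use elim in auto)
  qed
  show ?thesis using tendsto_cong[OF ev] lim by simp
qed


lemma binom_ratio:
  assumes "1 \<le> w" "L \<le> 2*w"
  shows "((L - j) choose w) * 2^j \<le> L choose w"
proof (induction j)
  case 0 then show ?case by simp
next
  case (Suc j)
  define n where "n = L - j"
  have n2: "n \<le> 2*w" using assms n_def by simp
  have step: "2 * ((n - 1) choose w) \<le> n choose w"
  proof (cases "n = 0")
    case True then show ?thesis using assms by simp
  next
    case False
    have e: "(n - w) * (n choose w) = n * ((n - 1) choose w)" by (rule binomial_absorb_comp)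
    have "n * (2 * ((n - 1) choose w)) = 2 * (n - w) * (n choose w)" using e by simp
    also have "\<dots> \<le> n * (n choose w)" using n2 by (intro mult_right_mono) auto
    finally show ?thesis using False by simp
  qed
  have "(L - Suc j) = n - 1" using n_def by simp
  hence "((L - Suc j) choose w) * 2^Suc j = (2 * ((n - 1) choose w)) * 2^j" by simp
  also have "\<dots> \<le> (n choose w) * 2^j" using step by simp
  also have "\<dots> \<le> L choose w" using Suc n_def by simp
  finally show ?case .
qed

lemma binom_lower_aux:
  fixes z d :: nat
  assumes "0 < z + d"
  shows "e \<le> d \<Longrightarrow> real ((2*z+e) choose z) \<ge> real ((2*z) choose z) * ((2*z+d)/(z+d))^e"
proof (induction e)
  case 0 then show ?case by simp
next
  case (Suc e)
  let ?q = "(2*real z+real d)/(real z+real d)"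
  define n where "n = 2*z + Suc e"
  have e: "(n - z) * (n choose z) = n * ((n - 1) choose z)" by (rule binomial_absorb_comp)
  have nz: "n - z = z + Suc e" using n_def by simp
  have pos: "real z + real (Suc e) > 0" by simp
  have E: "real (n choose z) = real n / (real z + real (Suc e)) * real ((n - 1) choose z)"
    using arg_cong[OF e, of real] nz pos by (simp add: field_simps)
  have R: "real n / (real z + real (Suc e)) \<ge> ?q"
  proof -
    have "?q * (real z + real (Suc e)) \<le> real n"
    proof -
      have "(2*real z+real d) * (real z + real (Suc e)) \<le> real n * (real z+real d)"
      proof -
        have h: "(1 + real e) * real z \<le> real d * real z" using Suc.prems by (intro mult_right_mono) auto
        show ?thesis using h unfolding n_def by (simp add: algebra_simps)
      qed
      moreover have "real (z + d) > 0" using assms by (simp only: of_nat_0_less_iff)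
      hence pd: "real z + real d > 0" by simp
      ultimately show ?thesis unfolding times_divide_eq_left pos_divide_le_eq[OF pd] by simp
    qed
    thus ?thesis using pos by (simp add: field_simps)
  qed
  have I: "real ((n - 1) choose z) \<ge> real ((2*z) choose z) * ?q^e"
    using Suc n_def by simp
  have q0: "?q \<ge> 0" by simp
  have "?q * (real ((2*z) choose z) * ?q^e) \<le> ?q * real ((n - 1) choose z)"
    by (rule mult_left_mono[OF I q0])
  also have "\<dots> \<le> real n / (real z + real (Suc e)) * real ((n - 1) choose z)"
    by (rule mult_right_mono[OF R]) simp
  also have "\<dots> = real (n choose z)" using E by simp
  finally have "real (n choose z) \<ge> ?q * (real ((2*z) choose z) * ?q^e)" .
  thus ?case unfolding n_def by (simp add: ac_simps)
qed

lemma binom_lower: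
  fixes z d :: nat
  assumes "0 < z + d"
  shows "real ((2*z+d) choose z) \<ge> real ((2*z) choose z) * 2^d * (1 - real d ^ 2 / (2 * (real z + real d)))"
proof -
  let ?x = "- real d / (2 * (real z + real d))"
  have "real (z + d) > 0" using assms by (simp only: of_nat_0_less_iff)
  hence pos: "real z + real d > 0" by simp
  have x1: "-1 \<le> ?x" using pos by (simp add: field_simps)
  have q: "(2*real z+real d)/(real z+real d) = 2 * (1 + ?x)" using pos by (simp add: field_simps)
  have "1 + real d * ?x \<le> (1 + ?x)^d" by (rule Bernoulli_inequality[OF x1])
  hence B: "1 - real d ^ 2 / (2 * (real z + real d)) \<le> (1 + ?x)^d"
    by (simp add: power2_eq_square)
  have "real ((2*z) choose z) * 2^d * (1 - real d ^ 2 / (2 * (real z + real d)))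
        \<le> real ((2*z) choose z) * 2^d * (1 + ?x)^d"
    using B by (intro mult_left_mono) auto
  also have "\<dots> = real ((2*z) choose z) * ((2*real z+real d)/(real z+real d))^d"
    unfolding q by (simp only: power_mult_distrib mult.assoc)
  also have "\<dots> \<le> real ((2*z+d) choose z)" using binom_lower_aux[OF assms, of d] by simp
  finally show ?thesis .
qed



lemma alg2:
  fixes F4 D Nm A sz sN P Y f B c :: real
  assumes "F4 > 0" "D > 0" "Nm > 0" "A > 0" "sz > 0" "P = F4 * D * Nm * A"
  shows "((f * F4 / sz) * D * B * c) * (Nm * sN) / P = f * B * c * (sN / sz) / A"
  using assms by (simp add: field_simps)

lemma real_diff_ge: "real (x - y) \<ge> real x - real y"
  by (cases "y \<le> x") (auto simp: of_nat_diff)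

lemma per_m:
  fixes a m :: nat
  assumes a: "1 \<le> a" and big: "4*(m+a+2) < 2^m"
  defines "z \<equiv> 2^m div 2 - (m+a)" and "d \<equiv> m + a - 2"
  shows "real (z) = 2^m/2 - real m - real a"
    and "real d = real m + real a - 2"
    and "(real ((2*z) choose z) * sqrt (real z) / 4^z)
           * (1 - real d ^ 2 / (2 * (real z + real d))) * (1 - 1/(2::real)^a)
           * sqrt (2^m / real z) / 2^(a+2)
         \<le> real (card (C4 (2^m) (m + a))) / ((2::real) ^ (2^m) / (real (2^m) * sqrt (real (2^m))))"
proof -
  have m1: "m \<ge> 1"
  proof (rule ccontr)
    assume "\<not> m \<ge> 1" hence "m = 0" by simp
    thus False using big by simp
  qed
  define H where "H = (2::nat)^(m-1)"
  have N: "(2::nat)^m = 2 * H" unfolding H_def using m1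
    by (metis Suc_diff_le diff_Suc_1 power_Suc)
  have Hd: "2^m div 2 = H" using N by simp
  have Hbig: "2*(m+a+2) < H" using big N by simp
  define k where "k = m + a"
  have zH: "z = H - k" unfolding z_def Hd k_def by simp
  have k2: "k \<ge> 2" using a m1 k_def by simp
  have dk: "d = k - 2" unfolding d_def k_def by simp
  define w where "w = z + d"
  have wH: "w = H - 2" using zH dk k2 Hbig k_def w_def by simp
  define L where "L = 2*z + d"
  have LN: "L = 2^m - k - 2" using N zH dk k2 Hbig k_def L_def by simp
  have z1: "z \<ge> 1" using zH Hbig k_def by simp
  show rz: "real z = 2^m/2 - real m - real a"
  proof -
    have "real z = real H - real k" using zH Hbig k_def by (simp add: of_nat_diff)
    moreover have "real H = 2^m/2" using arg_cong[OF N, of real] by simp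
    ultimately show ?thesis unfolding k_def by simp
  qed
  show rd: "real d = real m + real a - 2" using dk k2 k_def by (simp add: of_nat_diff)
  have cC: "card (C4 (2^m) k) = card {c::bool list. length c = L \<and> hw c = w \<and> no_zero_run k c}"
  proof -
    have "k + 2 \<le> (2::nat)^m" "2 \<le> (2::nat)^m div 2" using N Hbig Hd k_def by simp_all
    from card_C4[OF this] show ?thesis using LN wH Hd by simp
  qed
  have kL: "k \<le> L" using LN N Hbig k_def by simp
  have cS: "card (C4 (2^m) k) \<ge> (L choose w) - (L - k + 1) * ((L - k) choose w)"
    using card_S[OF kL, of w] cC by simp
  have w1: "1 \<le> w" using wH Hbig by simp
  have Lw: "L \<le> 2*w" using L_def w_def by simp
  have br: "((L - k) choose w) * 2^k \<le> L choose w" by (rule binom_ratio[OF w1 Lw])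
  define X where "X = real (L choose w)"
  define c where "c = 1 - 1/(2::real)^a"
  have c0: "c \<ge> 0" unfolding c_def by simp
  have cardX: "real (card (C4 (2^m) k)) \<ge> X * c"
  proof -
    have f1: "real (card (C4 (2^m) k)) \<ge> X - real ((L - k + 1) * ((L - k) choose w))"
      using cS real_diff_ge[of "L choose w" "(L - k + 1) * ((L - k) choose w)"] unfolding X_def
      by (meson of_nat_le_iff order_trans)
    have f2: "real ((L - k + 1) * ((L - k) choose w)) \<le> X / 2^a"
    proof -
      have "real (((L - k) choose w) * 2^k) \<le> real (L choose w)" using br by (simp only: of_nat_le_iff)
      hence "real ((L - k) choose w) * 2^k \<le> X" unfolding X_def by simp
      hence b1: "real ((L - k) choose w) \<le> X / 2^k" by (simp add: pos_le_divide_eq)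
      have "L - k + 1 \<le> (2::nat)^m" using LN k2 N Hbig by arith
      hence "real (L - k + 1) \<le> real ((2::nat)^m)" by (simp only: of_nat_le_iff)
      hence b2: "real (L - k + 1) \<le> 2^m" by simp
      have "real ((L - k + 1) * ((L - k) choose w)) = real (L - k + 1) * real ((L - k) choose w)" by (simp only: of_nat_mult)
      also have "\<dots> \<le> 2^m * (X / 2^k)"
        by (rule mult_mono[OF b2 b1]) (auto simp: X_def)
      also have "\<dots> = X / 2^a" unfolding k_def by (simp add: power_add field_simps)
      finally show ?thesis .
    qed
    have "X * c = X - X/2^a" unfolding c_def by (simp add: algebra_simps)
    thus ?thesis using f1 f2 by linarith
  qed
  have XL: "X = real ((2*z+d) choose z)"
  proof -
    have "L choose w = L choose (L - w)" by (rule binomial_symmetric) (simp add: L_def w_def)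
    moreover have "L - w = z" unfolding L_def w_def by simp
    ultimately show ?thesis unfolding X_def L_def by simp
  qed
  define fb where "fb = real ((2*z) choose z) * sqrt (real z) / 4^z"
  define B where "B = 1 - real d ^ 2 / (2 * (real z + real d))"
  have sz: "sqrt (real z) > 0" using z1 by simp
  have Cz: "real ((2*z) choose z) = fb * 4^z / sqrt (real z)" unfolding fb_def using sz by simp
  have XB: "X \<ge> (fb * 4^z / sqrt (real z)) * 2^d * B"
    using binom_lower[of z d] z1 unfolding XL B_def Cz by simp
  have cardY: "real (card (C4 (2^m) k)) \<ge> ((fb * 4^z / sqrt (real z)) * 2^d * B) * c"
    using cardX mult_right_mono[OF XB c0] by linarith
  have expo: "2*z + d + m + (a+2) = 2^m" using LN L_def k_def k2 N Hbig by simp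
  have P: "(2::real)^(2^m) = 4^z * 2^d * 2^m * 2^(a+2)"
  proof -
    have "(2::real)^(2^m) = 2^(2*z + d + m + (a+2))" using expo by simp
    also have "\<dots> = 4^z * 2^d * 2^m * 2^(a+2)" by (simp add: power_add power_mult)
    finally show ?thesis .
  qed
  define sN where "sN = sqrt (real ((2::nat)^m))"
  have Rm: "real (card (C4 (2^m) (m + a))) / ((2::real) ^ (2^m) / (real (2^m) * sqrt (real (2^m))))
        = real (card (C4 (2^m) k)) * (2^m * sN) / 2^(2^m)"
    unfolding k_def sN_def by simp
  have "((fb * 4^z / sqrt (real z)) * 2^d * B * c) * (2^m * sN) / 2^(2^m)
        = fb * B * c * (sN / sqrt (real z)) / 2^(a+2)"
    by (rule alg2[OF _ _ _ _ sz P]) simp_all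
  moreover have "((fb * 4^z / sqrt (real z)) * 2^d * B * c) * (2^m * sN) / 2^(2^m)
        \<le> real (card (C4 (2^m) k)) * (2^m * sN) / 2^(2^m)"
    by (intro divide_right_mono mult_right_mono) (use cardY sN_def in auto)
  moreover have "sqrt (2^m / real z) = sN / sqrt (real z)" unfolding sN_def by (simp add: real_sqrt_divide)
  ultimately show "(real ((2*z) choose z) * sqrt (real z) / 4^z)
           * (1 - real d ^ 2 / (2 * (real z + real d))) * (1 - 1/(2::real)^a)
           * sqrt (2^m / real z) / 2^(a+2)
         \<le> real (card (C4 (2^m) (m + a))) / ((2::real) ^ (2^m) / (real (2^m) * sqrt (real (2^m))))"
    unfolding Rm fb_def[symmetric] B_def[symmetric] c_def[symmetric] by simp
qed



lemma alg3:
  fixes t sp s2 :: real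
  assumes "t > 0" "sp > 0" "s2 * s2 = 2" "s2 > 0"
  shows "(1 / sp) * 1 * (1 - 1/t) * s2 / (t * 4) = (t - 1) / (t * t * 2 * (s2 * sp))"
proof -
  have "(t - 1) / (t * t * 2 * (s2 * sp)) = ((t - 1) * s2) / ((t * t * 2 * (s2 * sp)) * s2)"
    using assms by (simp only: mult_divide_mult_cancel_right)
  also have "(t * t * 2 * (s2 * sp)) * s2 = t * t * 2 * (s2 * s2) * sp" by (simp only: ac_simps)
  finally have "(t - 1) / (t * t * 2 * (s2 * sp)) = (t - 1) * s2 / (t * t * 2 * (s2 * s2) * sp)" .
  also have "\<dots> = (t - 1) * s2 / (t * t * 4 * sp)" using assms(3) by simp
  also have "\<dots> = (1 / sp) * 1 * (1 - 1/t) * s2 / (t * 4)" using assms by (simp add: field_simps)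
  finally show ?thesis by simp
qed

lemma part2:
  fixes a :: nat
  assumes a: "1 \<le> a"
  shows "liminf (\<lambda>m::nat. ereal (real (card (C4 (2^m) (m + a))) /
                 ((2::real) ^ (2^m) / (real (2^m) * sqrt (real (2^m))))))
       \<ge> ereal ((2 ^ a - 1) / (2 ^ (2*a+1) * sqrt (2 * pi)))"
proof -
  define z where "z = (\<lambda>m::nat. 2^m div 2 - (m+a))"
  define d where "d = (\<lambda>m::nat. m + a - 2)"
  define c where "c = 1 - 1/(2::real)^a"
  define g where "g = (\<lambda>m. (real ((2*z m) choose z m) * sqrt (real (z m)) / 4^(z m))
      * (1 - real (d m)^2/(2*(real (z m) + real (d m)))) * c * sqrt (2^m / real (z m)) / 2^(a+2))"
  define R where "R = (\<lambda>m::nat. real (card (C4 (2^m) (m + a))) /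
                 ((2::real) ^ (2^m) / (real (2^m) * sqrt (real (2^m)))))"
  have t0: "(\<lambda>m::nat. 4*(real m + real a + 2) / 2^m) \<longlonglongrightarrow> (0::real)" by real_asymp
  have ev: "eventually (\<lambda>m. 4*(m+a+2) < (2::nat)^m) sequentially"
  proof -
    have "eventually (\<lambda>m::nat. 4*(real m + real a + 2) / 2^m < 1) sequentially"
      using order_tendstoD(2)[OF t0 zero_less_one] by simp
    then show ?thesis
    proof (rule eventually_mono)
    fix m :: nat assume "4*(real m + real a + 2) / 2^m < 1"
    hence "real (4*(m+a+2)) < real ((2::nat)^m)" by (simp add: divide_less_eq)
    thus "4*(m+a+2) < (2::nat)^m" by (simp only: of_nat_less_iff)
  qed
  qed
  have le: "eventually (\<lambda>m. ereal (g m) \<le> ereal (R m)) sequentially"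
    using ev by eventually_elim (use per_m(3)[OF a] in \<open>simp add: g_def R_def z_def d_def c_def\<close>)
  have ez: "eventually (\<lambda>m. real (z m) = 2^m/2 - real m - real a) sequentially"
    using ev by eventually_elim (use per_m(1)[OF a] in \<open>simp add: z_def\<close>)
  have ed: "eventually (\<lambda>m. real (d m) = real m + real a - 2) sequentially"
    using ev by eventually_elim (use per_m(2)[OF a] in \<open>simp add: d_def\<close>)
  have zr: "filterlim (\<lambda>m. real (z m)) at_top sequentially"
  proof -
    have "filterlim (\<lambda>m::nat. (2::real)^m/2 - real m - real a) at_top sequentially" by real_asymp
    thus ?thesis using filterlim_cong[OF refl refl ez] by simp
  qed
  have zl: "filterlim z at_top sequentially"
    unfolding filterlim_at_top
  proof
    fix Z :: nat
    have "eventually (\<lambda>m. real Z \<le> real (z m)) sequentially"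
      using zr unfolding filterlim_at_top by blast
    thus "eventually (\<lambda>m. Z \<le> z m) sequentially" by (rule eventually_mono) simp
  qed
  have l1: "(\<lambda>m. real ((2*z m) choose z m) * sqrt (real (z m)) / 4^(z m)) \<longlonglongrightarrow> 1 / sqrt pi"
    using filterlim_compose[OF central_binom_lim zl] by simp
  have l2: "(\<lambda>m. 1 - real (d m)^2/(2*(real (z m) + real (d m)))) \<longlonglongrightarrow> 1"
  proof -
    have "(\<lambda>m::nat. 1 - (real m + real a - 2)^2 / (2 * (2^m/2 - 2))) \<longlonglongrightarrow> (1::real)" by real_asymp
    moreover have "eventually (\<lambda>m. 1 - (real m + real a - 2)^2 / (2 * (2^m/2 - 2)) =
        1 - real (d m)^2/(2*(real (z m) + real (d m)))) sequentially"
      using ez ed by eventually_elim simp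
    ultimately show ?thesis by (rule Lim_transform_eventually)
  qed
  have l3: "(\<lambda>m. sqrt (2^m / real (z m))) \<longlonglongrightarrow> sqrt 2"
  proof -
    have "(\<lambda>m::nat. 2^m / (2^m/2 - real m - real a)) \<longlonglongrightarrow> (2::real)" by real_asymp
    hence "(\<lambda>m::nat. sqrt (2^m / (2^m/2 - real m - real a))) \<longlonglongrightarrow> sqrt (2::real)"
      by (rule tendsto_real_sqrt)
    moreover have "eventually (\<lambda>m. sqrt (2^m / (2^m/2 - real m - real a)) =
        sqrt (2^m / real (z m))) sequentially"
      using ez by eventually_elim simp
    ultimately show ?thesis by (rule Lim_transform_eventually)
  qed
  have gl: "g \<longlonglongrightarrow> (1 / sqrt pi) * 1 * c * sqrt 2 / 2^(a+2)"
    unfolding g_def by (rule tendsto_divide[OF tendsto_mult[OF tendsto_mult[OF tendsto_mult[OF l1 l2] tendsto_const] l3] tendsto_const]) simp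
  have val: "(1 / sqrt pi) * 1 * c * sqrt 2 / 2^(a+2) = (2 ^ a - 1) / (2 ^ (2*a+1) * sqrt (2 * pi))"
  proof -
    obtain t :: real where t: "t = 2^a" by simp
    have tp: "t > 0" using t by simp
    have sp: "sqrt pi > 0" by simp
    have s2: "sqrt 2 * sqrt 2 = (2::real)" by simp
    have e1: "(2::real)^(a+2) = t * 4" using t by (simp add: power_add)
    have "(2::real)^(2*a+1) = 2^a * 2^a * 2" by (simp only: mult_2 power_add power_one_right)
    hence e2: "(2::real)^(2*a+1) = t * t * 2" using t by simp
    have e3: "sqrt (2 * pi) = sqrt 2 * sqrt pi" by (simp add: real_sqrt_mult)
    show ?thesis unfolding e1 e2 e3 c_def t[symmetric] using tp sp s2
      by (rule alg3) simp
  qed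
  have "liminf (\<lambda>m. ereal (g m)) = ereal ((1 / sqrt pi) * 1 * c * sqrt 2 / 2^(a+2))"
    by (intro lim_imp_Liminf tendsto_ereal gl) simp
  moreover have "liminf (\<lambda>m. ereal (g m)) \<le> liminf (\<lambda>m. ereal (R m))"
    by (rule Liminf_mono[OF le])
  ultimately show ?thesis unfolding R_def val by simp
qed


theorem theorem8:
  fixes n k :: nat
  assumes "even n" and "1 \<le> k" and "k \<le> n div 2"
  shows "balanced_MU n (C4 n k) \<and>
    (\<forall>a::nat. 1 \<le> a \<longrightarrow>
       liminf (\<lambda>m::nat. ereal (real (card (C4 (2^m) (m + a))) /
                 ((2::real) ^ (2^m) / (real (2^m) * sqrt (real (2^m))))))
       \<ge> ereal ((2 ^ a - 1) / (2 ^ (2*a+1) * sqrt (2 * pi))))"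
  using part1[OF assms(1,2)] part2 by blast

end
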